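(* Let $N\ge2$, $d\ge1$, $E,S\subset\mathbb{Z}_N^d$ with $$|E|\cdot|S|<\frac{N^d}{4}.$$ Let $1_E$ be the indicator function of $E$, let $r(x)=\sum_{m\notin S}\chi(x\cdot m)\widehat{1_E}(m)$, and let $G(x)=1$ if $|r(x)|\ge 1/2$ and $G(x)=0$ otherwise. Then $G(x)=1_E(x)$ for all $x\in\mathbb{Z}_N^d$ (i.e., $E$ is recovered by the Direct Rounding Algorithm).
   Context: $\chi(t)=e^{2\pi i t/N}$ for $t\in\mathbb{Z}_N$, $x\cdot m=\sum_i x_im_i$ mod $N$, and $\widehat{1_E}(m)=N^{-d}\sum_{x\in E}\chi(-x\cdot m)$. Thus $r$ is the inverse Fourier transform of $\widehat{1_E}$ with the frequencies in $S$ set to zero. *)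

theory Defs
  imports "HOL-Analysis.Analysis"
begin

definition ZNd :: "nat \<Rightarrow> nat \<Rightarrow> (nat \<Rightarrow> nat) set" where
  "ZNd N d = {x. (\<forall>i<d. x i < N) \<and> (\<forall>i\<ge>d. x i = 0)}"

definition dotN :: "nat \<Rightarrow> nat \<Rightarrow> (nat \<Rightarrow> nat) \<Rightarrow> (nat \<Rightarrow> nat) \<Rightarrow> int" where
  "dotN N d x m = int ((\<Sum>i<d. x i * m i) mod N)"

definition chi :: "nat \<Rightarrow> int \<Rightarrow> complex" where
  "chi N t = exp (2 * pi * \<i> * of_int t / of_nat N)"

definition indic :: "'a set \<Rightarrow> 'a \<Rightarrow> complex" where
  "indic E x = (if x \<in> E then 1 else 0)"

definition fourier_indic :: "nat \<Rightarrow> nat \<Rightarrow> (nat \<Rightarrow> nat) set \<Rightarrow> (nat \<Rightarrow> nat) \<Rightarrow> complex" where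
  "fourier_indic N d E m = (1 / of_nat N ^ d) * (\<Sum>x\<in>E. chi N (- dotN N d x m))"

definition rec_r :: "nat \<Rightarrow> nat \<Rightarrow> (nat \<Rightarrow> nat) set \<Rightarrow> (nat \<Rightarrow> nat) set \<Rightarrow> (nat \<Rightarrow> nat) \<Rightarrow> complex" where
  "rec_r N d E S x = (\<Sum>m\<in>ZNd N d - S. chi N (dotN N d x m) * fourier_indic N d E m)"

definition round_G :: "nat \<Rightarrow> nat \<Rightarrow> (nat \<Rightarrow> nat) set \<Rightarrow> (nat \<Rightarrow> nat) set \<Rightarrow> (nat \<Rightarrow> nat) \<Rightarrow> complex" where
  "round_G N d E S x = (if cmod (rec_r N d E S x) \<ge> 1/2 then 1 else 0)"

end

theory Submission
  imports Defs
begin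

lemma chi_add: "chi N (a + b) = chi N a * chi N b"
  unfolding chi_def by (simp add: distrib_left add_divide_distrib exp_add)

lemma chi_zero[simp]: "chi N 0 = 1" unfolding chi_def by simp

lemma chi_period: assumes "N > 0" shows "chi N (int N * k) = 1"
proof -
  have "2 * pi * \<i> * of_int (int N * k) / of_nat N = \<i> * (of_int k * (of_real pi * 2))"
    using assms by (simp add: field_simps)
  then show ?thesis unfolding chi_def by simp
qed

lemma chi_mod: assumes "N > 0" shows "chi N (a mod int N) = chi N a"
proof -
  have "a = a mod int N + int N * (a div int N)" by simp
  then have "chi N a = chi N (a mod int N) * chi N (int N * (a div int N))"
    by (metis chi_add)
  then show ?thesis using chi_period[OF assms] by simp
qed

lemma norm_chi[simp]: "norm (chi N t) = 1"
proof -
  have "2 * pi * \<i> * of_int t / of_nat N = \<i> * complex_of_real (2*pi*t/N)" by simp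
  then show ?thesis unfolding chi_def by (simp only:) (rule norm_exp_i_times)
qed

lemma chi_eq_1: assumes "N > 0" "chi N t = 1" shows "int N dvd t"
proof -
  from assms(2) obtain n::int where "Im (2 * pi * \<i> * of_int t / of_nat N) = of_int (2 * n) * pi"
    unfolding chi_def exp_eq_1 by blast
  then have "2 * pi * t / N = 2 * n * pi" by simp
  then have "real_of_int t = real_of_int (n * int N)" using assms(1) by (simp add: field_simps)
  then have "t = n * int N" by (simp only: of_int_eq_iff)
  then show ?thesis by simp
qed
lemma chi_dot: assumes "N > 0"
  shows "chi N (dotN N d x m) = chi N (int (\<Sum>i<d. x i * m i))"
  unfolding dotN_def by (simp add: of_nat_mod chi_mod[OF assms])

definition Dz :: "nat \<Rightarrow> (nat \<Rightarrow> nat) \<Rightarrow> (nat \<Rightarrow> nat) \<Rightarrow> (nat \<Rightarrow> nat) \<Rightarrow> int" where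
  "Dz d x y m = (\<Sum>i<d. (int (x i) - int (y i)) * int (m i))"

lemma chi_dot2: assumes "N > 0"
  shows "chi N (dotN N d x m) * chi N (- dotN N d y m) = chi N (Dz d x y m)"
proof -
  have "chi N (dotN N d x m) * chi N (- dotN N d y m) = chi N (dotN N d x m + - dotN N d y m)"
    by (rule chi_add[symmetric])
  also have "\<dots> = chi N (dotN N d x m) * chi N (- int (\<Sum>i<d. y i * m i))"
  proof -
    have "- dotN N d y m = (- int (\<Sum>i<d. y i * m i)) + int N * ((int (\<Sum>i<d. y i * m i)) div int N)"
      unfolding dotN_def of_nat_mod by (simp add: minus_mod_eq_mult_div[symmetric])
    then show ?thesis using chi_add chi_period[OF assms] by (metis mult_1_right)
  qed
  also have "\<dots> = chi N (int (\<Sum>i<d. x i * m i) - int (\<Sum>i<d. y i * m i))"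
    using chi_dot[OF assms] chi_add by (metis diff_conv_add_uminus)
  also have "int (\<Sum>i<d. x i * m i) - int (\<Sum>i<d. y i * m i) = Dz d x y m"
    unfolding Dz_def by (simp add: of_nat_sum sum_subtractf left_diff_distrib)
  finally show ?thesis .
qed

lemma bij_ZNd: "bij_betw (\<lambda>f. restrict f {..<d}) (ZNd N d) (PiE {..<d} (\<lambda>_. {..<N}))"
proof (rule bij_betwI[where g="\<lambda>f i. if i < d then f i else 0"])
  show "(\<lambda>f. restrict f {..<d}) \<in> ZNd N d \<rightarrow> PiE {..<d} (\<lambda>_. {..<N})"
    by (auto simp: ZNd_def)
  show "(\<lambda>f i. if i < d then f i else 0) \<in> PiE {..<d} (\<lambda>_. {..<N}) \<rightarrow> ZNd N d"
    by (auto simp: ZNd_def PiE_def Pi_def)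
  show "\<And>x. x \<in> ZNd N d \<Longrightarrow> (\<lambda>i. if i < d then restrict x {..<d} i else 0) = x"
    by (auto simp: ZNd_def fun_eq_iff)
  show "\<And>y. y \<in> PiE {..<d} (\<lambda>_. {..<N}) \<Longrightarrow> restrict (\<lambda>i. if i < d then y i else 0) {..<d} = y"
    by (auto simp: PiE_def extensional_def fun_eq_iff)
qed

lemma card_ZNd: "card (ZNd N d) = N ^ d"
  using bij_betw_same_card[OF bij_ZNd] by (simp add: card_PiE)

lemma finite_ZNd: "finite (ZNd N d)"
  using bij_betw_finite[OF bij_ZNd] by (simp add: finite_PiE)

lemma orth_zero:
  assumes N: "N > 0" and x: "x \<in> ZNd N d" and y: "y \<in> ZNd N d" and ne: "x \<noteq> y"
  shows "(\<Sum>m\<in>ZNd N d. chi N (Dz d x y m)) = 0"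
proof -
  obtain j where j: "j < d" "x j \<noteq> y j"
    using x y ne by (auto simp: ZNd_def fun_eq_iff) (metis not_le)
  define z where "z = int (x j) - int (y j)"
  define sh where "sh = (\<lambda>m::nat\<Rightarrow>nat. m(j := (m j + 1) mod N))"
  let ?Z = "ZNd N d"
  have shZ: "sh ` ?Z \<subseteq> ?Z" using j N by (auto simp: sh_def ZNd_def)
  have inj: "inj_on sh ?Z"
  proof (rule inj_onI)
    fix a b assume a: "a \<in> ?Z" and b: "b \<in> ?Z" and e: "sh a = sh b"
    have "(a j + 1) mod N = (b j + 1) mod N" using e unfolding sh_def by (metis fun_upd_same)
    moreover have "a j < N" "b j < N" using a b j by (auto simp: ZNd_def)
    moreover have "\<And>t. t < N \<Longrightarrow> (t + 1) mod N = (if t + 1 = N then 0 else t + 1)" by auto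
    ultimately have "a j = b j" by (cases "a j + 1 = N"; cases "b j + 1 = N"; simp)
    then show "a = b" using e unfolding sh_def fun_eq_iff by (metis fun_upd_other)
  qed
  have img: "sh ` ?Z = ?Z" by (rule endo_inj_surj[OF finite_ZNd shZ inj])
  have key: "chi N (Dz d x y (sh m)) = chi N z * chi N (Dz d x y m)" for m
  proof -
    define q where "q = int ((m j + 1) div N)"
    have "m j + 1 = N * ((m j + 1) div N) + (m j + 1) mod N" by simp
    then have "int (m j + 1) = int (N * ((m j + 1) div N) + (m j + 1) mod N)" by (rule arg_cong)
    then have "int (m j) + 1 = int N * q + int ((m j + 1) mod N)" by (simp only: q_def of_nat_add of_nat_mult of_nat_1)
    moreover have "sh m j = (m j + 1) mod N" unfolding sh_def by simp
    ultimately have shj: "int (sh m j) = int (m j) + 1 - int N * q" by simp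
    have "\<forall>i. (int (x i) - int (y i)) * int (sh m i) =
        (int (x i) - int (y i)) * int (m i) + (if i = j then z * (1 - int N * q) else 0)"
    proof
      fix i show "(int (x i) - int (y i)) * int (sh m i) =
        (int (x i) - int (y i)) * int (m i) + (if i = j then z * (1 - int N * q) else 0)"
      proof (cases "i = j")
        case True
        have e: "(int (x i) - int (y i)) * int (sh m i) = z * (int (m j) + 1 - int N * q)"
          using True shj by (simp add: z_def)
        have "z * (int (m j) + 1 - int N * q) = z * int (m j) + z * (1 - int N * q)"
          by (simp add: algebra_simps)
        then show ?thesis using True e by (simp add: z_def)
      next
        case False then show ?thesis by (simp add: sh_def)
      qed
    qed
    then have "Dz d x y (sh m) = Dz d x y m + z * (1 - int N * q)"
      unfolding Dz_def using j by (simp add: sum.distrib)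
    then have "Dz d x y (sh m) = z + (Dz d x y m + int N * (- z * q))" by (simp add: algebra_simps)
    then show ?thesis using chi_add chi_period[OF N] by (metis mult_1_right)
  qed
  have "(\<Sum>m\<in>?Z. chi N (Dz d x y m)) = (\<Sum>m\<in>sh ` ?Z. chi N (Dz d x y m))" using img by simp
  also have "\<dots> = (\<Sum>m\<in>?Z. chi N (Dz d x y (sh m)))" by (simp add: sum.reindex[OF inj])
  also have "\<dots> = chi N z * (\<Sum>m\<in>?Z. chi N (Dz d x y m))" by (simp add: key sum_distrib_left)
  finally have eq: "(1 - chi N z) * (\<Sum>m\<in>?Z. chi N (Dz d x y m)) = 0" by (simp add: algebra_simps)
  have "chi N z \<noteq> 1"
  proof
    assume "chi N z = 1"
    then have "int N dvd z" by (rule chi_eq_1[OF N])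
    moreover have "x j < N" "y j < N" using x y j by (auto simp: ZNd_def)
    moreover have "z \<noteq> 0" using j(2) unfolding z_def by simp
    ultimately have "\<bar>int N\<bar> \<le> \<bar>z\<bar>" and "\<bar>z\<bar> < int N"
      using dvd_imp_le_int[of z "int N"] unfolding z_def by auto
    then show False by simp
  qed
  then show ?thesis using eq by simp
qed

lemma orth:
  assumes N: "N > 0" and x: "x \<in> ZNd N d" and y: "y \<in> ZNd N d"
  shows "(\<Sum>m\<in>ZNd N d. chi N (Dz d x y m)) = (if x = y then of_nat N ^ d else 0)"
proof (cases "x = y")
  case True
  then have "\<And>m. Dz d x y m = 0" by (simp add: Dz_def)
  then show ?thesis using True by (simp add: card_ZNd)
next
  case False then show ?thesis using orth_zero[OF N x y] by simp
qed

lemma inversion: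
  assumes N: "N > 0" and E: "E \<subseteq> ZNd N d" and x: "x \<in> ZNd N d"
  shows "(\<Sum>m\<in>ZNd N d. chi N (dotN N d x m) * fourier_indic N d E m) = indic E x"
proof -
  have fE: "finite E" using finite_subset[OF E finite_ZNd] .
  let ?c = "1 / (of_nat N ^ d :: complex)"
  have "(\<Sum>m\<in>ZNd N d. chi N (dotN N d x m) * fourier_indic N d E m)
      = ?c * (\<Sum>m\<in>ZNd N d. \<Sum>y\<in>E. chi N (dotN N d x m) * chi N (- dotN N d y m))"
    unfolding fourier_indic_def by (simp add: sum_distrib_left sum_distrib_right mult_ac)
  also have "\<dots> = ?c * (\<Sum>y\<in>E. \<Sum>m\<in>ZNd N d. chi N (Dz d x y m))"
    by (simp add: chi_dot2[OF N] sum.swap[of _ "ZNd N d"])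
  also have "\<dots> = ?c * (\<Sum>y\<in>E. if x = y then of_nat N ^ d else 0)"
    using E by (intro arg_cong[where f="\<lambda>t. ?c * t"] sum.cong refl) (auto simp: orth[OF N x])
  also have "\<dots> = indic E x"
    using fE N by (simp add: indic_def)
  finally show ?thesis .
qed

lemma norm_fourier: "norm (fourier_indic N d E m) \<le> real (card E) / real N ^ d"
proof -
  have "norm (fourier_indic N d E m) = (1 / real N ^ d) * norm (\<Sum>x\<in>E. chi N (- dotN N d x m))"
    unfolding fourier_indic_def by (simp add: norm_mult norm_divide norm_power)
  also have "\<dots> \<le> (1 / real N ^ d) * (\<Sum>x\<in>E. norm (chi N (- dotN N d x m)))"
    by (intro mult_left_mono norm_sum) auto
  also have "\<dots> = real (card E) / real N ^ d" by simp
  finally show ?thesis .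
qed

theorem theorem4:
  fixes N d :: nat and E S :: "(nat \<Rightarrow> nat) set"
  assumes "N \<ge> 2" and "d \<ge> 1"
    and "E \<subseteq> ZNd N d" and "S \<subseteq> ZNd N d"
    and "real (card E) * real (card S) < real N ^ d / 4"
  shows "\<forall>x\<in>ZNd N d. round_G N d E S x = indic E x"
proof
  fix x assume x: "x \<in> ZNd N d"
  have N: "N > 0" using assms(1) by simp
  let ?f = "\<lambda>m. chi N (dotN N d x m) * fourier_indic N d E m"
  define T where "T = (\<Sum>m\<in>S. ?f m)"
  have fS: "finite S" using finite_subset[OF assms(4) finite_ZNd] .
  have r: "rec_r N d E S x = indic E x - T"
    unfolding rec_r_def T_def
    using sum_diff[OF finite_ZNd assms(4), of ?f] inversion[OF N assms(3) x] by simp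
  have "norm T \<le> (\<Sum>m\<in>S. norm (?f m))" unfolding T_def by (rule norm_sum)
  also have "\<dots> \<le> (\<Sum>m\<in>S. real (card E) / real N ^ d)"
    by (intro sum_mono) (simp add: norm_mult norm_fourier)
  also have "\<dots> = real (card S) * real (card E) / real N ^ d" by simp
  also have "\<dots> < 1/4"
  proof -
    have "real N ^ d > 0" using N by simp
    then show ?thesis using assms(5) by (simp add: field_simps)
  qed
  finally have T: "norm T < 1/4" .
  show "round_G N d E S x = indic E x"
  proof (cases "x \<in> E")
    case True
    have "1 - norm T \<le> norm (1 - T)" using norm_triangle_ineq2[of 1 T] by simp
    then have "norm (rec_r N d E S x) \<ge> 1/2" using T True r by (simp add: indic_def)
    then show ?thesis using True by (simp add: round_G_def indic_def)
  next
    case False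
    then have "norm (rec_r N d E S x) < 1/2" using T r by (simp add: indic_def)
    then show ?thesis using False by (simp add: round_G_def indic_def)
  qed
qed

end
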